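(* Let $\mathbb{K}$ be a field of characteristic zero containing all complex roots of unity and $q$ an indeterminate transcendental over $\mathbb{K}$. Let $f_n(q)$ be a $q$-holonomic sequence satisfying a recurrence $\sum_{j=0}^d c_j(q,q^n)f_{n+j}(q)=0$ for all $n\in\mathbb{N}$, with $c_j\in\mathbb{K}[u,v]$ and $c_d\neq0$ (order $d$). Then for $\alpha\in\mathbb{Q}$ with denominator $m\in\mathbb{N}$, the sequence $f_n(q^\alpha)$ is $q$-holonomic as well and satisfies a recurrence of this form of order at most $m^2\cdot d$.
   Context: A sequence $f_n(q)$ is $q$-holonomic if it satisfies a nontrivial linear recurrence $\sum_{j=0}^d c_j(q,q^n)f_{n+j}(q)=0$ for all $n\in\mathbb{N}$, with bivariate polynomials $c_j(u,v)\in\mathbb{K}[u,v]$ and $c_d\neq0$. *)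

theory Defs
  imports Complex_Main "HOL-Computational_Algebra.Polynomial" "HOL-Computational_Algebra.Fraction_Field"
begin

text \<open>The rational function field K(q) is modelled as the type 'k poly fract;
  the indeterminate of the polynomial ring plays the role of q (resp. of q^(1/m)).\<close>

definition ratfun_const :: "'k::field \<Rightarrow> 'k poly fract" where
  "ratfun_const k = Fract [:k:] 1"

definition qvar :: "'k::field poly fract" where
  "qvar = Fract [:0, 1:] 1"

definition ev_poly :: "'k::field poly \<Rightarrow> 'k poly fract \<Rightarrow> 'k poly fract" where
  "ev_poly p y = poly (map_poly ratfun_const p) y"

text \<open>Bivariate polynomials c(u,v) in K[u,v] are represented as 'k poly poly:
  polynomials in v whose coefficients are polynomials in u.  eval2 c x y = c(x,y).\<close>
definition eval2 :: "'k::field poly poly \<Rightarrow> 'k poly fract \<Rightarrow> 'k poly fract \<Rightarrow> 'k poly fract" where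
  "eval2 c x y = poly (map_poly (\<lambda>p. ev_poly p x) c) y"

definition subst_ratfun :: "'k::field poly fract \<Rightarrow> 'k poly fract \<Rightarrow> 'k poly fract" where
  "subst_ratfun f y =
     (let (p, r) = (SOME (p, r). r \<noteq> 0 \<and> f = Fract p r) in ev_poly p y / ev_poly r y)"

end

theory Submission
  imports Defs
begin


lemma rc_add: "ratfun_const (a + b) = ratfun_const a + ratfun_const b"
  by (simp add: ratfun_const_def)
lemma rc_mult: "ratfun_const (a * b) = ratfun_const a * ratfun_const b"
  by (simp add: ratfun_const_def ac_simps)
lemma rc_0[simp]: "ratfun_const 0 = 0"
  by (simp add: ratfun_const_def Zero_fract_def)
lemma rc_1[simp]: "ratfun_const 1 = 1"
  by (simp add: ratfun_const_def One_fract_def flip: one_pCons)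
lemma rc_eq0: "ratfun_const a = 0 \<longleftrightarrow> a = 0"
  by (simp add: ratfun_const_def Zero_fract_def eq_fract)

lemma degree_map_poly_le': "f 0 = 0 \<Longrightarrow> degree (map_poly f p) \<le> degree p"
  by (rule degree_le) (simp add: coeff_map_poly coeff_eq_0)

lemma poly_sum_bound:
  fixes p :: "'a::comm_semiring_1 poly"
  assumes "degree p \<le> N"
  shows "poly p y = (\<Sum>i\<le>N. coeff p i * y^i)"
proof -
  have "poly p y = (\<Sum>i\<le>degree p. coeff p i * y^i)" by (rule poly_altdef)
  also have "\<dots> = (\<Sum>i\<le>N. coeff p i * y^i)"
    by (rule sum.mono_neutral_left) (use assms in \<open>auto simp: coeff_eq_0\<close>)
  finally show ?thesis .
qed

lemma poly_map_sum:
  fixes h :: "'b::zero \<Rightarrow> 'a::comm_semiring_1"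
  assumes "h 0 = 0" "degree p \<le> N"
  shows "poly (map_poly h p) y = (\<Sum>i\<le>N. h (coeff p i) * y^i)"
  using poly_sum_bound[of "map_poly h p" N y] degree_map_poly_le'[of h p] assms
  by (simp add: coeff_map_poly)

lemma ev_sum_form: "degree p \<le> N \<Longrightarrow> ev_poly p y = (\<Sum>i\<le>N. ratfun_const (coeff p i) * y^i)"
  unfolding ev_poly_def by (rule poly_map_sum) auto

lemma ev_0[simp]: "ev_poly 0 y = 0" by (simp add: ev_poly_def)

lemma ev_pCons: "ev_poly (pCons a p) y = ratfun_const a + y * ev_poly p y"
  by (simp add: ev_poly_def map_poly_pCons)

lemma ev_add: "ev_poly (p + q) y = ev_poly p y + ev_poly q y"
proof -
  let ?N = "max (degree p) (degree q)"
  have "degree (p+q) \<le> ?N" by (simp add: degree_add_le)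
  then show ?thesis
    by (simp add: ev_sum_form[of _ ?N] coeff_add rc_add sum.distrib distrib_right)
qed

lemma ev_smult: "ev_poly (smult a p) y = ratfun_const a * ev_poly p y"
proof -
  have "degree (smult a p) \<le> degree p" by simp
  then show ?thesis
    by (simp add: ev_sum_form[of _ "degree p"] rc_mult sum_distrib_left mult.assoc)
qed

lemma ev_mult: "ev_poly (p * q) y = ev_poly p y * ev_poly q y"
  by (induction p) (auto simp: ev_add ev_smult ev_pCons algebra_simps)

lemma ev_const[simp]: "ev_poly [:a:] y = ratfun_const a"
  by (simp add: ev_pCons)

lemma ev_1[simp]: "ev_poly 1 y = 1"
  by (metis ev_const one_pCons rc_1)

lemma ev_monom: "ev_poly (monom a n) y = ratfun_const a * y ^ n"
  by (induction n) (auto simp: ev_pCons monom_Suc monom_0)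

lemma ev_sum: "ev_poly (\<Sum>i\<in>A. p i) y = (\<Sum>i\<in>A. ev_poly (p i) y)"
  by (induction A rule: infinite_finite_induct) (auto simp: ev_add)

lemma ev_power: "ev_poly (p ^ n) y = ev_poly p y ^ n"
  by (induction n) (auto simp: ev_mult)

lemma eval2_0[simp]: "eval2 0 x y = 0" by (simp add: eval2_def)

lemma eval2_pCons: "eval2 (pCons a c) x y = ev_poly a x + y * eval2 c x y"
  by (simp add: eval2_def map_poly_pCons)

lemma eval2_sum_form: "degree c \<le> N \<Longrightarrow> eval2 c x y = (\<Sum>i\<le>N. ev_poly (coeff c i) x * y^i)"
  unfolding eval2_def by (rule poly_map_sum) auto

lemma eval2_add: "eval2 (p + q) x y = eval2 p x y + eval2 q x y"
proof -
  let ?N = "max (degree p) (degree q)"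
  have "degree (p+q) \<le> ?N" by (simp add: degree_add_le)
  then show ?thesis
    by (simp add: eval2_sum_form[of _ ?N] coeff_add ev_add sum.distrib distrib_right)
qed

lemma eval2_smult: "eval2 (smult a p) x y = ev_poly a x * eval2 p x y"
proof -
  have "degree (smult a p) \<le> degree p" by simp
  then show ?thesis
    by (simp add: eval2_sum_form[of _ "degree p"] ev_mult sum_distrib_left mult.assoc)
qed

lemma eval2_mult: "eval2 (p * q) x y = eval2 p x y * eval2 q x y"
  by (induction p) (auto simp: eval2_add eval2_smult eval2_pCons algebra_simps)

lemma eval2_monom: "eval2 (monom a n) x y = ev_poly a x * y ^ n"
  by (induction n) (auto simp: eval2_pCons monom_Suc monom_0)

lemma eval2_sum: "eval2 (\<Sum>i\<in>A. p i) x y = (\<Sum>i\<in>A. eval2 (p i) x y)"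
  by (induction A rule: infinite_finite_induct) (auto simp: eval2_add)

lemma eval2_double: "degree c \<le> B \<Longrightarrow> (\<forall>b. degree (coeff c b) \<le> A) \<Longrightarrow>
   eval2 c x y = (\<Sum>b\<le>B. \<Sum>a\<le>A. ratfun_const (coeff (coeff c b) a) * x^a * y^b)"
  by (simp add: eval2_sum_form[of _ B] ev_sum_form[of _ A] sum_distrib_right)



definition good :: "'k::field poly fract \<Rightarrow> bool" where
  "good y \<longleftrightarrow> (\<forall>r. r \<noteq> 0 \<longrightarrow> ev_poly r y \<noteq> 0)"

lemma subst_Fract:
  assumes g: "good y" and r: "r \<noteq> 0"
  shows "subst_ratfun (Fract p r) y = ev_poly p y / ev_poly r y"
proof -
  let ?P = "\<lambda>(p', r'). r' \<noteq> 0 \<and> Fract p r = Fract p' r'"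
  have ex: "\<exists>pr. ?P pr" by (rule exI[of _ "(p,r)"]) (use r in auto)
  obtain p' r' where pr: "(SOME pr. ?P pr) = (p', r')" by (cases "SOME pr. ?P pr") auto
  from someI_ex[OF ex] pr have r': "r' \<noteq> 0" and eq: "Fract p r = Fract p' r'" by auto
  from eq r r' have "p * r' = p' * r" by (simp add: eq_fract)
  then have e: "ev_poly p y * ev_poly r' y = ev_poly p' y * ev_poly r y" by (metis ev_mult)
  have n1: "ev_poly r y \<noteq> 0" using g r by (auto simp: good_def)
  have n2: "ev_poly r' y \<noteq> 0" using g r' by (auto simp: good_def)
  have "subst_ratfun (Fract p r) y = ev_poly p' y / ev_poly r' y"
    unfolding subst_ratfun_def using pr by simp
  also have "\<dots> = ev_poly p y / ev_poly r y" using e n1 n2 by (simp add: divide_simps)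
  finally show ?thesis .
qed

lemma good_nz: "good y \<Longrightarrow> r \<noteq> 0 \<Longrightarrow> ev_poly r y \<noteq> 0"
  by (auto simp: good_def)

lemma subst_add:
  assumes g: "good y"
  shows "subst_ratfun (u + v) y = subst_ratfun u y + subst_ratfun v y"
proof -
  obtain p r where u: "u = Fract p r" "r \<noteq> 0" by (cases u)
  obtain p2 r2 where v: "v = Fract p2 r2" "r2 \<noteq> 0" by (cases v)
  have n1: "ev_poly r y \<noteq> 0" "ev_poly r2 y \<noteq> 0" using g u v by (auto simp: good_nz)
  show ?thesis using u v n1 g
    by (simp add: subst_Fract ev_add ev_mult divide_simps)
qed

lemma subst_mult:
  assumes g: "good y"
  shows "subst_ratfun (u * v) y = subst_ratfun u y * subst_ratfun v y"
proof -
  obtain p r where u: "u = Fract p r" "r \<noteq> 0" by (cases u)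
  obtain p2 r2 where v: "v = Fract p2 r2" "r2 \<noteq> 0" by (cases v)
  have n1: "ev_poly r y \<noteq> 0" "ev_poly r2 y \<noteq> 0" using g u v by (auto simp: good_nz)
  show ?thesis using u v n1 g
    by (simp add: subst_Fract ev_add ev_mult divide_simps)
qed

lemma subst_emb: "good y \<Longrightarrow> subst_ratfun (Fract p 1) y = ev_poly p y"
  by (simp add: subst_Fract)

lemma subst_0: "good y \<Longrightarrow> subst_ratfun 0 y = 0"
  using subst_emb[of y 0] by (simp add: Zero_fract_def)

lemma subst_1: "good y \<Longrightarrow> subst_ratfun 1 y = 1"
  using subst_emb[of y 1] by (simp add: One_fract_def)

lemma subst_rc: "good y \<Longrightarrow> subst_ratfun (ratfun_const k) y = ratfun_const k"
  by (metis ratfun_const_def subst_emb ev_const)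

lemma subst_qvar: "good y \<Longrightarrow> subst_ratfun qvar y = y"
  unfolding qvar_def by (simp add: subst_emb ev_pCons)

lemma subst_power: "good y \<Longrightarrow> subst_ratfun (u ^ n) y = subst_ratfun u y ^ n"
  by (induction n) (auto simp: subst_1 subst_mult)

lemma subst_sum: "good y \<Longrightarrow> subst_ratfun (\<Sum>i\<in>A. u i) y = (\<Sum>i\<in>A. subst_ratfun (u i) y)"
  by (induction A rule: infinite_finite_induct) (auto simp: subst_0 subst_add)

lemma subst_nz: assumes g: "good y" and u: "u \<noteq> 0" shows "subst_ratfun u y \<noteq> 0"
proof -
  obtain p r where uu: "u = Fract p r" "r \<noteq> 0" by (cases u)
  have "p \<noteq> 0" using u uu by (auto simp: eq_fract(3) Zero_fract_def)
  then show ?thesis using uu g by (simp add: subst_Fract good_nz)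
qed

lemma subst_ev: "good y \<Longrightarrow> subst_ratfun (ev_poly p x) y = ev_poly p (subst_ratfun x y)"
  by (induction p) (auto simp: ev_pCons subst_add subst_mult subst_rc subst_0)

lemma subst_eval2: "good y \<Longrightarrow> subst_ratfun (eval2 c x z) y = eval2 c (subst_ratfun x y) (subst_ratfun z y)"
  by (induction c) (auto simp: eval2_pCons subst_add subst_mult subst_ev subst_0)

lemma ev_emb: "ev_poly p (Fract s 1) = Fract (pcompose p s) 1"
  by (induction p) (auto simp: ev_pCons pcompose_pCons ratfun_const_def Zero_fract_def)

lemma Fract1_eq0: "Fract (p::'a::idom) 1 = 0 \<longleftrightarrow> p = 0"
  by (simp add: Zero_fract_def eq_fract)

lemma good_emb: assumes "degree s > 0" shows "good (Fract s 1)"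
  unfolding good_def using pcompose_eq_0[of _ s] assms by (auto simp: ev_emb Fract1_eq0)

lemma qvar_power: "qvar ^ k = Fract (monom 1 k) 1"
  by (induction k) (auto simp: qvar_def One_fract_def monom_Suc monom_0 simp flip: one_pCons)

lemma qvar_nz: "qvar \<noteq> 0"
  by (simp add: qvar_def Fract1_eq0)

lemma pow_inv: "(w::'a::field) \<noteq> 0 \<Longrightarrow> i \<le> D \<Longrightarrow> w ^ D * inverse w ^ i = w ^ (D - i)"
proof -
  assume w: "w \<noteq> 0" and i: "i \<le> D"
  have "w ^ D = w ^ (D - i) * w ^ i" using i by (simp flip: power_add)
  then show ?thesis using w by (simp add: power_inverse field_simps)
qed

lemma good_inverse:
  assumes g: "good z" and z: "z \<noteq> 0"
  shows "good (inverse z)"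
  unfolding good_def
proof (intro allI impI)
  fix r :: "'a poly" assume r: "r \<noteq> 0"
  define D where "D = degree r"
  define R where "R = (\<Sum>i\<le>D. monom (coeff r i) (D - i))"
  have "coeff R 0 = (\<Sum>i\<le>D. if i = D then coeff r i else 0)"
    unfolding R_def coeff_sum by (intro sum.cong) auto
  also have "\<dots> = coeff r D" by simp
  finally have "coeff R 0 \<noteq> 0" using r by (simp add: D_def)
  then have "R \<noteq> 0" by auto
  then have nz: "ev_poly R z \<noteq> 0" using g by (simp add: good_nz)
  have "z ^ D * ev_poly r (inverse z) = (\<Sum>i\<le>D. ratfun_const (coeff r i) * (z ^ D * inverse z ^ i))"
    by (simp add: ev_sum_form[of r D] D_def sum_distrib_left mult_ac)
  also have "\<dots> = (\<Sum>i\<le>D. ratfun_const (coeff r i) * z ^ (D - i))"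
    by (intro sum.cong) (auto simp: pow_inv z)
  also have "\<dots> = ev_poly R z" by (simp add: R_def ev_sum ev_monom)
  finally show "ev_poly r (inverse z) \<noteq> 0" using nz by auto
qed

lemma good_y: assumes "a \<noteq> 0" shows "good (qvar powi a)"
proof (cases "a > 0")
  case True
  then obtain k where k: "a = int k" "k > 0" by (metis zero_less_imp_eq_int of_nat_0_less_iff)
  then show ?thesis by (auto simp: power_int_of_nat qvar_power intro!: good_emb simp: degree_monom_eq)
next
  case False
  then obtain k where k: "a = - int k" "k > 0" using assms
    by (metis neg_0_less_iff_less not_less_iff_gr_or_eq zero_less_imp_eq_int of_nat_0_less_iff minus_minus)
  have "good (qvar ^ k)" using k by (auto simp: qvar_power intro!: good_emb simp: degree_monom_eq)
  moreover have "qvar ^ k \<noteq> 0" by (simp add: qvar_nz)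
  ultimately have "good (inverse (qvar ^ k))" by (rule good_inverse)
  then show ?thesis using k by (simp add: power_int_minus power_int_of_nat)
qed

lemma ev_qvar: "ev_poly p qvar = Fract p 1"
  by (simp add: qvar_def ev_emb)

lemma eval2_qvar: "eval2 c qvar (Fract s 1) = Fract (poly c s) 1"
  by (induction c) (auto simp: eval2_pCons ev_qvar Zero_fract_def)

lemma poly_monom_nz:
  fixes c :: "'a::idom poly poly"
  shows "c \<noteq> 0 \<Longrightarrow> (\<forall>b. degree (coeff c b) < n) \<Longrightarrow> poly c (monom 1 n) \<noteq> 0"
proof (induction c)
  case 0 then show ?case by simp
next
  case (pCons a c)
  show ?case
  proof (cases "c = 0")
    case True then show ?thesis using pCons by simp
  next
    case False
    have "\<forall>b. degree (coeff c b) < n" using pCons(4) by (metis coeff_pCons_Suc)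
    then have P: "poly c (monom 1 n) \<noteq> 0" using pCons False by auto
    have da: "degree a < n" using pCons(4) by (metis coeff_pCons_0)
    have "degree (monom 1 n * poly c (monom 1 n)) = n + degree (poly c (monom 1 n))"
      using P by (simp add: degree_mult_eq degree_monom_eq)
    then have "degree (monom 1 n * poly c (monom 1 n)) > degree a" using da by linarith
    then have "a + monom 1 n * poly c (monom 1 n) \<noteq> 0"
      by (metis add.commute degree_add_eq_right less_not_refl2 degree_0 gr_implies_not0)
    then show ?thesis by simp
  qed
qed

lemma eval2_nz:
  assumes "c \<noteq> 0" "\<forall>b. degree (coeff c b) < n"
  shows "eval2 c qvar (qvar ^ n) \<noteq> 0"
  using poly_monom_nz[OF assms] by (simp add: qvar_power eval2_qvar Fract1_eq0)



definition bnd :: "'a::zero poly poly \<Rightarrow> nat \<Rightarrow> nat \<Rightarrow> bool" where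
  "bnd b A B \<longleftrightarrow> degree b \<le> B \<and> (\<forall>j. degree (coeff b j) \<le> A)"

lemma bnd_0[simp]: "bnd 0 A B" by (simp add: bnd_def)

lemma bnd_mono: "bnd b A B \<Longrightarrow> A \<le> A' \<Longrightarrow> B \<le> B' \<Longrightarrow> bnd b A' B'"
  by (auto simp: bnd_def intro: order_trans)

lemma bnd_add: "bnd p A B \<Longrightarrow> bnd q A B \<Longrightarrow> bnd (p + q) A B"
  by (auto simp: bnd_def intro!: degree_add_le)

lemma bnd_sum: "finite S \<Longrightarrow> (\<And>i. i \<in> S \<Longrightarrow> bnd (f i) A B) \<Longrightarrow> bnd (\<Sum>i\<in>S. f i) A B"
  by (auto simp: bnd_def coeff_sum intro!: degree_sum_le)

lemma bnd_monom: "degree p \<le> A \<Longrightarrow> b \<le> B \<Longrightarrow> bnd (monom p b) A B"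
  by (auto simp: bnd_def intro: order_trans[OF degree_monom_le])

lemma bnd_monom2: "a \<le> A \<Longrightarrow> b \<le> B \<Longrightarrow> bnd (monom (monom k a) b) A B"
  by (rule bnd_monom) (auto intro: order_trans[OF degree_monom_le])

lemma bnd_mult:
  fixes p q :: "'a::comm_semiring_1 poly poly"
  assumes "bnd p A1 B1" "bnd q A2 B2" shows "bnd (p * q) (A1 + A2) (B1 + B2)"
  unfolding bnd_def
proof (intro conjI allI)
  show "degree (p * q) \<le> B1 + B2"
    using assms degree_mult_le[of p q] by (auto simp: bnd_def)
  fix j
  show "degree (coeff (p * q) j) \<le> A1 + A2"
    unfolding coeff_mult
    by (rule degree_sum_le) (use assms in \<open>auto simp: bnd_def intro!: order_trans[OF degree_mult_le] add_mono\<close>)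
qed

lemma bnd_coeff: assumes "bnd b A B" "A < a \<or> B < j" shows "coeff (coeff b j) a = 0"
proof -
  have d: "degree b \<le> B" "degree (coeff b j) \<le> A" using assms(1) by (auto simp: bnd_def)
  show ?thesis
  proof (cases "A < a")
    case True then show ?thesis using d by (intro coeff_eq_0) linarith
  next
    case False then have "B < j" using assms(2) by auto
    then have "coeff b j = 0" using d by (intro coeff_eq_0) linarith
    then show ?thesis by simp
  qed
qed

definition sig :: "nat \<Rightarrow> 'a::comm_semiring_1 poly poly \<Rightarrow> 'a poly poly" where
  "sig i b = (\<Sum>j\<le>degree b. monom (coeff b j * monom 1 (i * j)) j)"

lemma bnd_sig: assumes "bnd b A B" shows "bnd (sig i b) (A + i * B) B"
  unfolding sig_def
proof (rule bnd_sum)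
  fix j assume j: "j \<in> {..degree b}"
  have "degree (coeff b j * monom 1 (i * j)) \<le> A + i * j"
    using assms by (auto simp: bnd_def intro!: order_trans[OF degree_mult_le] add_mono degree_monom_le)
  also have "\<dots> \<le> A + i * B" using j assms by (auto simp: bnd_def)
  finally show "bnd (monom (coeff b j * monom 1 (i * j)) j) (A + i * B) B"
    using j assms by (intro bnd_monom) (auto simp: bnd_def)
qed simp

lemma eval2_sig: "eval2 (sig i b) x z = eval2 b x (x ^ i * z)"
proof -
  have "eval2 (sig i b) x z = (\<Sum>j\<le>degree b. ev_poly (coeff b j) x * x ^ (i * j) * z ^ j)"
    by (simp add: sig_def eval2_sum eval2_monom ev_mult ev_monom)
  also have "\<dots> = (\<Sum>j\<le>degree b. ev_poly (coeff b j) x * (x ^ i * z) ^ j)"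
    by (simp add: power_mult_distrib mult_ac flip: power_mult)
  also have "\<dots> = eval2 b x (x ^ i * z)" by (simp add: eval2_sum_form[of b "degree b"])
  finally show ?thesis .
qed

lemma coeff_dsum:
  assumes "finite As" "finite Bs"
  shows "coeff (coeff (\<Sum>b\<in>Bs. \<Sum>a\<in>As. monom (monom (h a b) a) b) j) i =
         (if i \<in> As \<and> j \<in> Bs then h i j else 0)"
proof -
  have "coeff (coeff (\<Sum>b\<in>Bs. \<Sum>a\<in>As. monom (monom (h a b) a) b) j) i =
        (\<Sum>b\<in>Bs. \<Sum>a\<in>As. if b = j \<and> a = i then h a b else 0)"
    unfolding coeff_sum by (intro sum.cong refl) auto
  also have "\<dots> = (\<Sum>b\<in>Bs. if b = j then (if i \<in> As then h i b else 0) else 0)"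
  proof (intro sum.cong refl)
    fix b assume "b \<in> Bs"
    show "(\<Sum>a\<in>As. if b = j \<and> a = i then h a b else 0) = (if b = j then (if i \<in> As then h i b else 0) else 0)"
      by (cases "b = j") (auto simp: assms sum.delta sum.delta')
  qed
  also have "\<dots> = (if i \<in> As \<and> j \<in> Bs then h i j else 0)"
    using assms by (simp add: sum.delta')
  finally show ?thesis .
qed

lemma sum_dvd_reindex:
  fixes h :: "nat \<Rightarrow> 'a::comm_monoid_add"
  assumes m: "m > 0" and h: "\<And>j. \<not> m dvd j \<Longrightarrow> h j = 0"
  shows "(\<Sum>j<m * K. h j) = (\<Sum>b<K. h (m * b))"
proof -
  have sub: "(\<lambda>b. m * b) ` {..<K} \<subseteq> {..<m * K}" using m by auto
  have "(\<Sum>j<m * K. h j) = (\<Sum>j\<in>(\<lambda>b. m * b) ` {..<K}. h j)"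
  proof (rule sum.mono_neutral_right)
    show "\<forall>j\<in>{..<m * K} - (\<lambda>b. m * b) ` {..<K}. h j = 0"
    proof
      fix j assume j: "j \<in> {..<m * K} - (\<lambda>b. m * b) ` {..<K}"
      show "h j = 0"
      proof (rule h, rule notI)
        assume "m dvd j" then obtain b where b: "j = m * b" by blast
        then have "b < K" using j m by auto
        then show False using j b by auto
      qed
    qed
  qed (use sub in auto)
  also have "\<dots> = (\<Sum>b<K. h (m * b))"
    by (rule sum.reindex_cong[where l="\<lambda>b. m * b"]) (use m in \<open>auto simp: inj_on_def\<close>)
  finally show ?thesis .
qed



definition islin :: "(('u \<Rightarrow> 'k::field) \<Rightarrow> 'e \<Rightarrow> 'k) \<Rightarrow> bool" where
  "islin \<Phi> \<longleftrightarrow> (\<forall>x y e. \<Phi> (\<lambda>u. x u + y u) e = \<Phi> x e + \<Phi> y e) \<and> (\<forall>c x e. \<Phi> (\<lambda>u. c * x u) e = c * \<Phi> x e)"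

lemma islin_add: "islin \<Phi> \<Longrightarrow> \<Phi> (\<lambda>u. x u + y u) e = \<Phi> x e + \<Phi> y e"
  by (simp add: islin_def)
lemma islin_scal: "islin \<Phi> \<Longrightarrow> \<Phi> (\<lambda>u. c * x u) e = c * \<Phi> x e"
  by (simp add: islin_def)
lemma islin_zero: "islin \<Phi> \<Longrightarrow> \<Phi> (\<lambda>u. 0) e = 0"
  using islin_scal[of \<Phi> 0 "\<lambda>_. 0" e] by simp

lemma islin_sum: assumes lin: "islin \<Phi>" shows "finite S \<Longrightarrow> \<Phi> (\<lambda>v. \<Sum>u\<in>S. g u v) e = (\<Sum>u\<in>S. \<Phi> (g u) e)"
proof (induction S rule: finite_induct)
  case empty then show ?case by (simp add: islin_zero[OF lin])
next
  case (insert a S)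
  have "\<Phi> (\<lambda>v. \<Sum>u\<in>insert a S. g u v) e = \<Phi> (\<lambda>v. g a v + (\<Sum>u\<in>S. g u v)) e"
    using insert by simp
  also have "\<dots> = \<Phi> (g a) e + \<Phi> (\<lambda>v. \<Sum>u\<in>S. g u v) e"
    using islin_add[OF lin, of "g a" "\<lambda>v. \<Sum>u\<in>S. g u v"] by simp
  finally show ?case using insert by simp
qed

lemma lin_nontrivial:
  fixes \<Phi> :: "('u \<Rightarrow> 'k::field) \<Rightarrow> 'e \<Rightarrow> 'k"
  shows "finite E \<Longrightarrow> islin \<Phi> \<Longrightarrow> finite U \<Longrightarrow> card E < card U \<Longrightarrow>
    \<exists>x. (\<exists>u\<in>U. x u \<noteq> 0) \<and> (\<forall>u. u \<notin> U \<longrightarrow> x u = 0) \<and> (\<forall>e\<in>E. \<Phi> x e = 0)"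
proof (induction E arbitrary: U \<Phi> rule: finite_induct)
  case empty
  then obtain u where u: "u \<in> U" by fastforce
  show ?case by (rule exI[of _ "\<lambda>v. if v = u then 1 else 0"]) (use u in auto)
next
  case (insert e E)
  define \<delta> where "\<delta> = (\<lambda>(u::'u) (v::'u). if v = u then (1::'k) else 0)"
  note lin = insert(4)
  show ?case
  proof (cases "\<forall>u\<in>U. \<Phi> (\<delta> u) e = 0")
    case True
    have "card E < card U" using insert by simp
    then obtain x where x: "\<exists>u\<in>U. x u \<noteq> 0" "\<forall>u. u \<notin> U \<longrightarrow> x u = 0" "\<forall>e\<in>E. \<Phi> x e = 0"
      using insert.IH[OF lin insert(5)] by blast
    have xe: "x = (\<lambda>v. \<Sum>u\<in>U. x u * \<delta> u v)"
    proof
      fix v show "x v = (\<Sum>u\<in>U. x u * \<delta> u v)"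
        using x(2) insert(5) by (cases "v \<in> U") (auto simp: \<delta>_def if_distrib sum.delta cong: if_cong)
    qed
    have "\<Phi> x e = (\<Sum>u\<in>U. \<Phi> (\<lambda>v. x u * \<delta> u v) e)"
      by (subst xe) (rule islin_sum[OF lin, OF insert(5)])
    also have "\<dots> = 0" using True by (simp add: islin_scal[OF lin])
    finally show ?thesis using x by auto
  next
    case False
    then obtain u1 where u1: "u1 \<in> U" and \<rho>: "\<Phi> (\<delta> u1) e \<noteq> 0" by auto
    define \<rho> where "\<rho> = \<Phi> (\<delta> u1) e"
    define \<Psi> where "\<Psi> = (\<lambda>y e'. \<Phi> (\<lambda>v. y v + (- (\<Phi> y e / \<rho>)) * \<delta> u1 v) e')"
    have key: "\<Phi> (\<lambda>v. y v + c * \<delta> u1 v) e' = \<Phi> y e' + c * \<Phi> (\<delta> u1) e'" for y c e'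
      using islin_add[OF lin, of y "\<lambda>v. c * \<delta> u1 v"] islin_scal[OF lin, of c "\<delta> u1"] by simp
    have linP: "islin \<Psi>"
      unfolding islin_def
    proof (intro conjI allI)
      fix x y e'
      have "(\<lambda>v. x v + y v + - (\<Phi> (\<lambda>u. x u + y u) e / \<rho>) * \<delta> u1 v) =
            (\<lambda>v. (x v + - (\<Phi> x e / \<rho>) * \<delta> u1 v) + (y v + - (\<Phi> y e / \<rho>) * \<delta> u1 v))"
        by (auto simp: islin_add[OF lin] algebra_simps add_divide_distrib)
      then show "\<Psi> (\<lambda>u. x u + y u) e' = \<Psi> x e' + \<Psi> y e'"
        unfolding \<Psi>_def by (simp add: islin_add[OF lin])
    next
      fix c x e'
      have "(\<lambda>v. c * x v + - (\<Phi> (\<lambda>u. c * x u) e / \<rho>) * \<delta> u1 v) =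
            (\<lambda>v. c * (x v + - (\<Phi> x e / \<rho>) * \<delta> u1 v))"
        by (auto simp: islin_scal[OF lin] field_simps)
      then show "\<Psi> (\<lambda>u. c * x u) e' = c * \<Psi> x e'"
        unfolding \<Psi>_def by (simp add: islin_scal[OF lin])
    qed
    have fin: "finite (U - {u1})" using insert(5) by simp
    have "card E < card (U - {u1})" using insert u1 by simp
    then obtain y where y: "\<exists>u\<in>U - {u1}. y u \<noteq> 0" "\<forall>u. u \<notin> U - {u1} \<longrightarrow> y u = 0" "\<forall>e\<in>E. \<Psi> y e = 0"
      using insert.IH[OF linP fin] by blast
    define x where "x = (\<lambda>v. y v + (- (\<Phi> y e / \<rho>)) * \<delta> u1 v)"
    have "\<exists>u\<in>U. x u \<noteq> 0" using y(1) by (auto simp: x_def \<delta>_def)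
    moreover have "\<forall>u. u \<notin> U \<longrightarrow> x u = 0" using y(2) u1 by (auto simp: x_def \<delta>_def)
    moreover have "\<Phi> x e = 0" using \<rho> unfolding x_def key by (simp add: \<rho>_def)
    moreover have "\<forall>e'\<in>E. \<Phi> x e' = 0" using y(3) by (simp add: x_def \<Psi>_def)
    ultimately show ?thesis by auto
  qed
qed



lemma eval2_mm: "eval2 (monom (monom k e1) e2) x z = ratfun_const k * x ^ e1 * z ^ e2"
  by (simp add: eval2_monom ev_monom)

lemma exists_L:
  fixes c :: "nat \<Rightarrow> 'k::field poly poly" and a :: int
  assumes a: "a \<noteq> 0"
  shows "\<exists>l F Al Bl. (\<forall>n. F n \<noteq> (0::'k poly fract)) \<and>
     (\<forall>j\<le>d. \<forall>n. eval2 (l j) qvar (qvar ^ n) = F n * eval2 (c j) (qvar powi a) ((qvar powi a) ^ n)) \<and>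
     (\<forall>j\<le>d. bnd (l j) Al Bl)"
proof -
  define A where "A = (\<Sum>j\<le>d. \<Sum>b\<le>degree (c j). degree (coeff (c j) b))"
  define B where "B = (\<Sum>j\<le>d. degree (c j))"
  define \<kappa> where "\<kappa> = (\<lambda>j i b. coeff (coeff (c j) b) i)"
  have hB: "degree (c j) \<le> B" if "j \<le> d" for j
    unfolding B_def by (rule member_le_sum) (use that in auto)
  have hA: "degree (coeff (c j) b) \<le> A" if "j \<le> d" for j b
  proof (cases "b \<le> degree (c j)")
    case True
    have "degree (coeff (c j) b) \<le> (\<Sum>b\<le>degree (c j). degree (coeff (c j) b))"
      by (rule member_le_sum) (use True in auto)
    also have "\<dots> \<le> A" unfolding A_def by (rule member_le_sum) (use that in auto)
    finally show ?thesis .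
  next
    case False then show ?thesis by (simp add: coeff_eq_0)
  qed
  have ce: "eval2 (c j) w z = (\<Sum>b\<le>B. \<Sum>i\<le>A. ratfun_const (\<kappa> j i b) * w ^ i * z ^ b)" if "j \<le> d" for j w z
    unfolding \<kappa>_def by (rule eval2_double) (use hA hB that in auto)
  show ?thesis
  proof (cases "a > 0")
    case True
    then obtain k where k: "a = int k" by (metis zero_less_imp_eq_int)
    define l where "l = (\<lambda>j. \<Sum>b\<le>B. \<Sum>i\<le>A. monom (monom (\<kappa> j i b) (k * i)) (k * b))"
    have y: "qvar powi a = qvar ^ k" using k by (simp add: power_int_of_nat)
    have "eval2 (l j) qvar (qvar ^ n) = 1 * eval2 (c j) (qvar powi a) ((qvar powi a) ^ n)" if "j \<le> d" for j n
      unfolding y ce[OF that] l_def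
      by (simp add: eval2_sum eval2_mm mult_ac flip: power_mult)
    moreover have "bnd (l j) (k * A) (k * B)" for j
      unfolding l_def by (intro bnd_sum bnd_monom2) auto
    ultimately show ?thesis by (intro exI[of _ l] exI[of _ "\<lambda>n. 1"] exI[of _ "k * A"] exI[of _ "k * B"]) auto
  next
    case False
    then obtain k where k: "a = - int k" using a
      by (metis neg_0_less_iff_less not_less_iff_gr_or_eq zero_less_imp_eq_int minus_minus)
    define w where "w = (qvar :: 'k poly fract) ^ k"
    have w: "w \<noteq> 0" by (simp add: w_def qvar_nz)
    define l where "l = (\<lambda>j. \<Sum>b\<le>B. \<Sum>i\<le>A. monom (monom (\<kappa> j i b) (k * (A - i))) (k * (B - b)))"
    define F where "F = (\<lambda>n. w ^ A * (w ^ n) ^ B)"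
    have y: "qvar powi a = inverse w" using k by (simp add: power_int_minus power_int_of_nat w_def)
    have "eval2 (l j) qvar (qvar ^ n) = F n * eval2 (c j) (qvar powi a) ((qvar powi a) ^ n)" if "j \<le> d" for j n
    proof -
      have "F n * eval2 (c j) (qvar powi a) ((qvar powi a) ^ n) =
         (\<Sum>b\<le>B. \<Sum>i\<le>A. ratfun_const (\<kappa> j i b) * (w ^ A * inverse w ^ i) * ((w ^ n) ^ B * inverse (w ^ n) ^ b))"
        unfolding y ce[OF that] F_def by (simp add: sum_distrib_left mult_ac power_inverse)
      also have "\<dots> = (\<Sum>b\<le>B. \<Sum>i\<le>A. ratfun_const (\<kappa> j i b) * w ^ (A - i) * (w ^ n) ^ (B - b))"
        using w by (intro sum.cong refl) (simp add: pow_inv)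
      also have "\<dots> = eval2 (l j) qvar (qvar ^ n)"
        unfolding l_def by (simp add: eval2_sum eval2_mm w_def mult_ac flip: power_mult)
      finally show ?thesis by simp
    qed
    moreover have "bnd (l j) (k * A) (k * B)" for j
      unfolding l_def by (intro bnd_sum bnd_monom2) auto
    moreover have "F n \<noteq> 0" for n using w by (simp add: F_def)
    ultimately show ?thesis by (intro exI[of _ l] exI[of _ F] exI[of _ "k * A"] exI[of _ "k * B"]) auto
  qed
qed



lemma mm_scal: "monom (monom (c * v) i) j = monom (monom c 0) 0 * monom (monom v i) j"
  by (simp add: mult_monom)

lemma coeff_CC: "coeff (coeff (monom (monom c 0) 0 * M) j) i = c * coeff (coeff M j) i"
  by (simp add: monom_0)

lemma eval2_if: "eval2 (if b then X else 0) x z = (if b then eval2 X x z else 0)"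
  by simp

lemma mult_if: "(if b then (A::'a::ring) else 0) * g = (if b then A * g else 0)"
  by simp

theorem corollary2:
  fixes f :: "nat \<Rightarrow> 'k::field_char_0 poly fract"
    and c :: "nat \<Rightarrow> 'k poly poly"
    and d :: nat
    and \<alpha> :: rat
    and a :: int
    and m :: nat
  assumes roots_of_unity: "\<forall>n>0. \<exists>\<zeta>::'k. \<zeta> ^ n = 1 \<and> (\<forall>k. 0 < k \<and> k < n \<longrightarrow> \<zeta> ^ k \<noteq> 1)"
    and lead: "c d \<noteq> 0"
    and rec: "\<forall>n. (\<Sum>j\<le>d. eval2 (c j) qvar (qvar ^ n) * f (n + j)) = 0"
    and alpha_nz: "\<alpha> \<noteq> 0"
    and alpha_frac: "quotient_of \<alpha> = (a, int m)"
  shows "\<exists>d' (c' :: nat \<Rightarrow> 'k poly poly).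
           d' \<le> m ^ 2 * d \<and> c' d' \<noteq> 0 \<and>
           (\<forall>n. (\<Sum>j\<le>d'. eval2 (c' j) (qvar ^ m) ((qvar ^ m) ^ n)
                    * subst_ratfun (f (n + j)) (qvar powi a)) = 0)"
proof -
  have m: "m > 0" using quotient_of_denom_pos[OF alpha_frac] by simp
  have a0: "a \<noteq> 0" using quotient_of_div[OF alpha_frac] alpha_nz by auto
  define y where "y = (qvar :: 'k poly fract) powi a"
  have gy: "good y" unfolding y_def by (rule good_y[OF a0])
  define g where "g = (\<lambda>n. subst_ratfun (f n) y)"
  obtain L F Al Bl where F: "\<forall>n. F n \<noteq> (0::'k poly fract)"
    and LF: "\<forall>j\<le>d. \<forall>n. eval2 (L j) qvar (qvar ^ n) = F n * eval2 (c j) y (y ^ n)"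
    and Lb: "\<forall>j\<le>d. bnd (L j) Al Bl"
    using exists_L[OF a0, of d c] unfolding y_def by blast
  have sc: "subst_ratfun (eval2 (c j) qvar (qvar ^ n)) y = eval2 (c j) y (y ^ n)" for j n
    using gy by (simp add: subst_eval2 subst_qvar subst_power)
  have recg: "(\<Sum>j\<le>d. eval2 (L j) qvar (qvar ^ n) * g (n + j)) = 0" for n
  proof -
    have "(\<Sum>j\<le>d. eval2 (L j) qvar (qvar ^ n) * g (n + j)) =
          F n * subst_ratfun (\<Sum>j\<le>d. eval2 (c j) qvar (qvar ^ n) * f (n + j)) y"
      using gy LF by (simp add: subst_sum subst_mult sc g_def sum_distrib_left mult_ac)
    also have "\<dots> = 0" using rec gy by (simp add: subst_0)
    finally show ?thesis .
  qed
  define Ad where "Ad = (\<Sum>b\<le>degree (c d). degree (coeff (c d) b))"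
  have Ldnz: "eval2 (L d) qvar (qvar ^ n) \<noteq> 0" if "n > Ad" for n
  proof -
    have "\<forall>b. degree (coeff (c d) b) < n"
    proof
      fix b show "degree (coeff (c d) b) < n"
      proof (cases "b \<le> degree (c d)")
        case True
        have "degree (coeff (c d) b) \<le> Ad" unfolding Ad_def by (rule member_le_sum) (use True in auto)
        then show ?thesis using that by simp
      next
        case False then show ?thesis using that by (simp add: coeff_eq_0)
      qed
    qed
    then have "eval2 (c d) qvar (qvar ^ n) \<noteq> 0" using eval2_nz lead by blast
    then have "eval2 (c d) y (y ^ n) \<noteq> 0" using subst_nz[OF gy] sc by metis
    then show ?thesis using LF F by simp
  qed
  have signz: "sig i (L d) \<noteq> 0" for i
  proof
    assume "sig i (L d) = 0"
    then have "eval2 (sig i (L d)) qvar (qvar ^ Suc Ad) = 0" by simp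
    then have "eval2 (L d) qvar (qvar ^ (i + Suc Ad)) = 0" by (simp only: eval2_sig power_add[symmetric])
    then show False using Ldnz[of "i + Suc Ad"] by simp
  qed
  define e where "e = m ^ 2 * d - d"
  have md: "d \<le> m ^ 2 * d" using m by simp
  have ed: "e + d = m ^ 2 * d" using md by (simp add: e_def)
  define C1 where "C1 = Al + e * Bl"
  define Cx where "Cx = Bl"
  define C where "C = C1 + Cx"
  define K where "K = 2 * (e + 1) * m * C + 1"
  define N where "N = m * K - C"
  have h1: "1 \<le> (e + 1) * m" using m by simp
  have "C \<le> (e + 1) * m * C" using mult_le_mono1[OF h1, of C] by simp
  moreover have "K = 2 * ((e + 1) * m * C) + 1" by (simp add: K_def mult.assoc)
  ultimately have KC: "C < K" by linarith
  have "K \<le> m * K" using m by simp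
  then have mKC: "C < m * K" using KC by linarith
  have N1: "N \<ge> 1" using mKC by (simp add: N_def)
  have NC: "N + C = m * K" using mKC by (simp add: N_def)
  have sigb: "bnd (sig i (L j)) C1 Cx" if "i \<le> e" "j \<le> d" for i j
    using bnd_sig[OF Lb[rule_format, OF that(2)], of i] that
    by (elim bnd_mono) (auto simp: C1_def Cx_def intro: mult_le_mono1)
  define P where "P = (\<lambda>(x :: nat \<times> nat \<times> nat \<Rightarrow> 'k) i. \<Sum>b\<in>{..<N}. \<Sum>a'\<in>{..<N}. monom (monom (x (i, a', b)) a') b)"
  define Mx where "Mx = (\<lambda>x k. \<Sum>i\<le>e. \<Sum>j\<le>d. if i + j = k then P x i * sig i (L j) else 0)"
  define \<Phi> where "\<Phi> = (\<lambda>x (k, ga, de). coeff (coeff (Mx x k) de) ga)"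
  define U where "U = {..e} \<times> {..<N} \<times> {..<N}"
  define Bad where "Bad = {(ga, de). ga < m * K \<and> de < m * K \<and> \<not> (m dvd ga \<and> m dvd de)}"
  define E where "E = {..m ^ 2 * d} \<times> Bad"
  have Padd: "P (\<lambda>u. x u + z u) i = P x i + P z i" for x z i
    by (simp add: P_def sum.distrib flip: add_monom)
  have Pscal: "P (\<lambda>u. s * x u) i = monom (monom s 0) 0 * P x i" for s x i
    by (simp add: P_def sum_distrib_left mm_scal)
  have Madd: "Mx (\<lambda>u. x u + z u) k = Mx x k + Mx z k" for x z k
    unfolding Mx_def Padd by (simp add: sum.distrib[symmetric] distrib_right cong: if_cong) (intro sum.cong refl, auto)
  have Mscal: "Mx (\<lambda>u. s * x u) k = monom (monom s 0) 0 * Mx x k" for s x k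
    unfolding Mx_def Pscal by (simp add: sum_distrib_left mult.assoc if_distrib cong: if_cong)
  have lin: "islin \<Phi>"
    unfolding islin_def \<Phi>_def by (auto simp: Madd Mscal coeff_CC split: prod.splits)
  have finU: "finite U" by (simp add: U_def)
  have cardU: "card U = (e + 1) * (N * N)" by (simp add: U_def card_cartesian_product)
  define Good where "Good = (\<lambda>(a', b). (m * a', m * b)) ` ({..<K} \<times> {..<K})"
  have Bad_eq: "Bad = ({..<m * K} \<times> {..<m * K}) - Good"
  proof (intro set_eqI iffI)
    fix p assume "p \<in> Bad"
    then show "p \<in> ({..<m * K} \<times> {..<m * K}) - Good" by (auto simp: Bad_def Good_def)
  next
    fix p assume p: "p \<in> ({..<m * K} \<times> {..<m * K}) - Good"
    obtain ga de where pp: "p = (ga, de)" by (cases p)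
    have "\<not> (m dvd ga \<and> m dvd de)"
    proof
      assume "m dvd ga \<and> m dvd de"
      then obtain a' b where ab: "ga = m * a'" "de = m * b" by blast
      then have "a' < K" "b < K" using p pp m by auto
      then show False using p pp ab by (auto simp: Good_def)
    qed
    then show "p \<in> Bad" using p pp by (auto simp: Bad_def)
  qed
  have cardGood: "card Good = K * K"
    unfolding Good_def by (subst card_image) (use m in \<open>auto simp: inj_on_def card_cartesian_product\<close>)
  have GoodSub: "Good \<subseteq> {..<m * K} \<times> {..<m * K}" using m by (auto simp: Good_def)
  have cardBad: "card Bad = m * K * (m * K) - K * K"
  proof -
    have finG: "finite Good" by (simp add: Good_def)
    show ?thesis unfolding Bad_eq using card_Diff_subset[OF finG GoodSub] cardGood
      by (simp add: card_cartesian_product)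
  qed
  have finE: "finite E" unfolding E_def Bad_eq by simp
  have cardE: "card E = (m ^ 2 * d + 1) * (m * K * (m * K) - K * K)"
    by (simp add: E_def card_cartesian_product cardBad)
  have ineq: "card E < card U"
  proof -
    define E0 :: int where "E0 = int m ^ 2 * int d - int d + 1"
    have E0e: "int (e + 1) = E0" using md by (simp add: E0_def e_def of_nat_diff)
    have E0p: "E0 > 0" using E0e by linarith
    have "int K = 2 * int (e + 1) * int m * int C + 1"
      by (simp only: K_def of_nat_add of_nat_mult of_nat_1 of_nat_numeral)
    then have KK: "int K = 2 * E0 * int m * int C + 1" by (simp only: E0e)
    have iN: "int N = int m * int K - int C" using mKC by (simp add: N_def of_nat_diff)
    have mK: "K * K \<le> m * K * (m * K)" using m by (simp add: mult_le_mono Suc_leI)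
    have iE: "int (card E) = (int m ^ 2 * int d + 1) * (int m * int K * (int m * int K) - int K * int K)"
    proof -
      have 1: "int (card E) = int (m ^ 2 * d + 1) * int (m * K * (m * K) - K * K)"
        by (simp only: cardE of_nat_mult)
      have 2: "int (m * K * (m * K) - K * K) = int m * int K * (int m * int K) - int K * int K"
        using mK by (simp add: of_nat_diff)
      have 3: "int (m ^ 2 * d + 1) = int m ^ 2 * int d + 1" by simp
      show ?thesis unfolding 1 2 3 ..
    qed
    have iU: "int (card U) = E0 * (int N * int N)"
      by (simp only: cardU of_nat_mult E0e)
    have ident: "E0 * ((int m * int K - int C) * (int m * int K - int C)) -
        (int m ^ 2 * int d + 1) * (int m * int K * (int m * int K) - int K * int K)
        = int K * (int K - 2 * E0 * int m * int C) + E0 * (int C * int C)"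
      unfolding E0_def by (simp add: algebra_simps power2_eq_square)
    have "int K * (int K - 2 * E0 * int m * int C) = int K" using KK by simp
    moreover have "E0 * (int C * int C) \<ge> 0" using E0p by simp
    moreover have "int K > 0" using KK KC by linarith
    ultimately have "E0 * ((int m * int K - int C) * (int m * int K - int C)) -
        (int m ^ 2 * int d + 1) * (int m * int K * (int m * int K) - int K * int K) > 0"
      unfolding ident by linarith
    moreover have "int (card U) = E0 * ((int m * int K - int C) * (int m * int K - int C))"
      using iU iN by simp
    ultimately have "int (card E) < int (card U)" using iE by linarith
    then show ?thesis by linarith
  qed
  obtain x where x1: "\<exists>u\<in>U. x u \<noteq> 0" and x3: "\<forall>ee\<in>E. \<Phi> x ee = 0"
    using lin_nontrivial[OF finE lin finU ineq] by blast
  define M where "M = Mx x"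
  define Nm where "Nm = N - 1"
  have Pb: "bnd (P x i) Nm Nm" for i
    unfolding P_def by (intro bnd_sum bnd_monom2) (auto simp: Nm_def)
  have Mb: "bnd (M k) (Nm + C1) (Nm + Cx)" for k
    unfolding M_def Mx_def
    by (intro bnd_sum) (auto intro!: bnd_mult Pb sigb)
  have Mz: "M k = 0" if "k > m ^ 2 * d" for k
    unfolding M_def Mx_def using that ed by (intro sum.neutral ballI) auto
  have zc: "coeff (coeff (M k) de) ga = 0" if "\<not> (m dvd ga \<and> m dvd de)" for k ga de
  proof (cases "k \<le> m ^ 2 * d")
    case False then show ?thesis using Mz by simp
  next
    case True
    show ?thesis
    proof (cases "ga < m * K \<and> de < m * K")
      case False
      then show ?thesis using NC N1 by (intro bnd_coeff[OF Mb]) (auto simp: C_def Nm_def)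
    next
      case True
      then have "(k, ga, de) \<in> E" using \<open>k \<le> m ^ 2 * d\<close> that by (auto simp: E_def Bad_def)
      from x3[rule_format, OF this] show ?thesis by (simp add: \<Phi>_def M_def)
    qed
  qed
  have Mb2: "bnd (M k) (m * K - 1) (m * K - 1)" for k
    using Mb[of k] NC N1 by (elim bnd_mono) (auto simp: C_def Nm_def)
  obtain i1 where i1: "i1 \<le> e" "P x i1 \<noteq> 0"
  proof -
    obtain i1 a1 b1 where u: "(i1, a1, b1) \<in> U" "x (i1, a1, b1) \<noteq> 0" using x1 by auto
    have "coeff (coeff (P x i1) b1) a1 = x (i1, a1, b1)"
      using u by (simp add: P_def coeff_dsum U_def)
    then have "P x i1 \<noteq> 0" using u by auto
    then show ?thesis using that u by (auto simp: U_def)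
  qed
  define I where "I = {i. i \<le> e \<and> P x i \<noteq> 0}"
  have finI: "finite I" by (simp add: I_def)
  define i0 where "i0 = Max I"
  have i0: "i0 \<in> I" unfolding i0_def using i1 finI by (intro Max_in) (auto simp: I_def)
  have i0max: "P x i = 0" if "i0 < i" "i \<le> e" for i
  proof (rule ccontr)
    assume "P x i \<noteq> 0"
    then have "i \<in> I" using that by (simp add: I_def)
    then have "i \<le> i0" unfolding i0_def by (rule Max_ge[OF finI])
    then show False using that by simp
  qed
  have Mtop: "M (i0 + d) = P x i0 * sig i0 (L d)"
  proof -
    have "M (i0 + d) = (\<Sum>i\<le>e. if i = i0 then P x i0 * sig i0 (L d) else 0)"
      unfolding M_def Mx_def
    proof (intro sum.cong refl)
      fix i assume i: "i \<in> {..e}"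
      show "(\<Sum>j\<le>d. if i + j = i0 + d then P x i * sig i (L j) else 0) =
            (if i = i0 then P x i0 * sig i0 (L d) else 0)"
      proof (cases "i = i0")
        case True then show ?thesis by (simp add: sum.delta)
      next
        case False
        show ?thesis
        proof (cases "i < i0")
          case True then show ?thesis using False by (auto intro!: sum.neutral)
        next
          case False2: False
          then have "P x i = 0" using i0max i False by auto
          then show ?thesis using False by (auto intro!: sum.neutral)
        qed
      qed
    qed
    also have "\<dots> = P x i0 * sig i0 (L d)" using i0 by (simp add: I_def)
    finally show ?thesis .
  qed
  have Mtopnz: "M (i0 + d) \<noteq> 0" using Mtop i0 signz by (simp add: I_def)
  define S where "S = {k. k \<le> m ^ 2 * d \<and> M k \<noteq> 0}"
  have finS: "finite S" by (simp add: S_def)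
  define d' where "d' = Max S"
  have i0S: "i0 + d \<in> S" using i0 Mtopnz ed by (auto simp: S_def I_def)
  have d'S: "d' \<in> S" unfolding d'_def using i0S finS by (intro Max_in) auto
  have d'max: "M k = 0" if "d' < k" for k
  proof (cases "k \<le> m ^ 2 * d")
    case True
    show ?thesis
    proof (rule ccontr)
      assume "M k \<noteq> 0"
      then have "k \<in> S" using True by (simp add: S_def)
      then have "k \<le> d'" unfolding d'_def by (rule Max_ge[OF finS])
      then show False using that by simp
    qed
  next
    case False then show ?thesis using Mz by simp
  qed
  define c' where "c' = (\<lambda>j. \<Sum>b\<in>{..<K}. \<Sum>a'\<in>{..<K}. monom (monom (coeff (coeff (M j) (m * b)) (m * a')) a') b)"
  have c'nz: "c' d' \<noteq> 0"
  proof -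
    have "M d' \<noteq> 0" using d'S by (simp add: S_def)
    then obtain de where de: "coeff (M d') de \<noteq> 0" by (metis poly_eqI coeff_0)
    then obtain ga where ga: "coeff (coeff (M d') de) ga \<noteq> 0" by (metis poly_eqI coeff_0)
    then have dv: "m dvd ga" "m dvd de" using zc by blast+
    then obtain a' b where ab: "ga = m * a'" "de = m * b" by blast
    have "ga \<le> m * K - 1" "de \<le> m * K - 1" using ga bnd_coeff[OF Mb2[of d'], of ga de] not_le by blast+
    then have "m * a' < m * K" "m * b < m * K" using ab mKC by arith+
    then have "a' < K" "b < K" by simp_all
    then have "coeff (coeff (c' d') b) a' \<noteq> 0" using ga ab by (simp add: c'_def coeff_dsum)
    then show ?thesis by auto
  qed
  have set_eq: "{..m * K - 1} = {..<m * K}" using mKC by auto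
  have ceval: "eval2 (c' j) (qvar ^ m) ((qvar ^ m) ^ n) = eval2 (M j) qvar (qvar ^ n)" for j n
  proof -
    have "eval2 (M j) qvar (qvar ^ n) = (\<Sum>de\<le>m * K - 1. \<Sum>ga\<le>m * K - 1.
          ratfun_const (coeff (coeff (M j) de) ga) * qvar ^ ga * (qvar ^ n) ^ de)"
      using Mb2[of j] by (intro eval2_double) (auto simp: bnd_def)
    also have "\<dots> = (\<Sum>de<m * K. \<Sum>ga<m * K.
          ratfun_const (coeff (coeff (M j) de) ga) * qvar ^ ga * (qvar ^ n) ^ de)"
      by (simp only: set_eq)
    also have "\<dots> = (\<Sum>b<K. \<Sum>ga<m * K.
          ratfun_const (coeff (coeff (M j) (m * b)) ga) * qvar ^ ga * (qvar ^ n) ^ (m * b))"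
      by (rule sum_dvd_reindex[OF m]) (auto intro!: sum.neutral simp: zc)
    also have "\<dots> = (\<Sum>b<K. \<Sum>a'<K.
          ratfun_const (coeff (coeff (M j) (m * b)) (m * a')) * qvar ^ (m * a') * (qvar ^ n) ^ (m * b))"
      by (intro sum.cong refl sum_dvd_reindex[OF m]) (auto simp: zc)
    also have "\<dots> = eval2 (c' j) (qvar ^ m) ((qvar ^ m) ^ n)"
      by (simp add: c'_def eval2_sum eval2_mm mult_ac flip: power_mult)
    finally show ?thesis by simp
  qed
  have final: "(\<Sum>j\<le>d'. eval2 (c' j) (qvar ^ m) ((qvar ^ m) ^ n) * g (n + j)) = 0" for n
  proof -
    define Pv where "Pv = (\<lambda>i. eval2 (P x i) qvar (qvar ^ n))"
    define Sv where "Sv = (\<lambda>i l. eval2 (sig i (L l)) qvar (qvar ^ n))"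
    define Fn where "Fn = (\<lambda>i l j. if i + l = j then Pv i * Sv i l * g (n + j) else 0)"
    have "(\<Sum>j\<le>d'. eval2 (c' j) (qvar ^ m) ((qvar ^ m) ^ n) * g (n + j)) =
          (\<Sum>j\<le>d'. eval2 (M j) qvar (qvar ^ n) * g (n + j))" by (simp add: ceval)
    also have "\<dots> = (\<Sum>j\<le>m ^ 2 * d. eval2 (M j) qvar (qvar ^ n) * g (n + j))"
      using d'S by (intro sum.mono_neutral_left) (auto simp: S_def d'max)
    also have "\<dots> = (\<Sum>j\<le>m ^ 2 * d. \<Sum>i\<le>e. \<Sum>l\<le>d. Fn i l j)"
      unfolding M_def Mx_def by (simp add: eval2_sum sum_distrib_right eval2_mult Pv_def Sv_def Fn_def eval2_if mult_if cong: if_cong)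
    also have "\<dots> = (\<Sum>i\<le>e. \<Sum>j\<le>m ^ 2 * d. \<Sum>l\<le>d. Fn i l j)"
      by (rule sum.swap)
    also have "\<dots> = (\<Sum>i\<le>e. \<Sum>l\<le>d. \<Sum>j\<le>m ^ 2 * d. Fn i l j)"
      by (intro sum.cong refl sum.swap)
    also have "\<dots> = (\<Sum>i\<le>e. \<Sum>l\<le>d. Pv i * Sv i l * g (n + i + l))"
      using ed by (intro sum.cong refl) (auto simp: Fn_def sum.delta' add.assoc)
    also have "\<dots> = (\<Sum>i\<le>e. Pv i * (\<Sum>l\<le>d. eval2 (L l) qvar (qvar ^ (n + i)) * g (n + i + l)))"
    proof -
      have pw: "(qvar::'k poly fract) ^ i * qvar ^ n = qvar ^ (n + i)" for i
        by (simp add: power_add mult.commute)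
      show ?thesis by (simp only: Sv_def eval2_sig pw sum_distrib_left mult_ac)
    qed
    also have "\<dots> = 0" by (simp add: recg)
    finally show ?thesis .
  qed
  show ?thesis
    using final c'nz d'S unfolding g_def y_def
    by (intro exI[of _ d'] exI[of _ c']) (auto simp: S_def)
qed


end
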